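(* Let $\phi_1,\dots,\phi_m:\mathbb{R}^n\to\mathbb{R}$ be softmax-type functions, i.e. for each $i\in[m]$ there are $j_i\in[n]$ and $\xi_{i1},\dots,\xi_{in}\ge0$ with $\sum_k\xi_{ik}=1$ such that $\phi_i(z)=\frac{\exp(z_{j_i})}{\sum_{k=1}^n\xi_{ik}\exp(z_k)}$. Let $\sum_{\gamma\in\mathbb{Z}_{\ge0}^n}a_\gamma z^\gamma$ be the Taylor series at $0$ of $\prod_{i=1}^m\phi_i$. Then for every integer $k\ge0$, $$\sum_{\gamma\in\mathbb{Z}_{\ge0}^n:\,|\gamma|=k}|a_\gamma|\le(e^3m)^k.$$
   Context: $z^\gamma=z_1^{\gamma_1}\cdots z_n^{\gamma_n}$ and $|\gamma|=\gamma_1+\dots+\gamma_n$. *)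

theory Defs
  imports "HOL-Analysis.Analysis"
begin

text \<open>Points of R^n are represented as functions nat => real; only the coordinates
  0..n-1 are relevant (coordinate k of the paper is index k-1 here).\<close>

definition partial :: "nat \<Rightarrow> ((nat \<Rightarrow> real) \<Rightarrow> real) \<Rightarrow> ((nat \<Rightarrow> real) \<Rightarrow> real)" where
  "partial k f = (\<lambda>z. deriv (\<lambda>t. f (z(k := t))) (z k))"

definition mixed_partial :: "nat \<Rightarrow> (nat \<Rightarrow> nat) \<Rightarrow> ((nat \<Rightarrow> real) \<Rightarrow> real) \<Rightarrow> ((nat \<Rightarrow> real) \<Rightarrow> real)" where
  "mixed_partial n \<gamma> f = foldr (\<lambda>k g. (partial k ^^ \<gamma> k) g) [0..<n] f"

definition taylor_coeff :: "nat \<Rightarrow> ((nat \<Rightarrow> real) \<Rightarrow> real) \<Rightarrow> (nat \<Rightarrow> nat) \<Rightarrow> real" where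
  "taylor_coeff n f \<gamma> = mixed_partial n \<gamma> f (\<lambda>_. 0) / (\<Prod>k<n. fact (\<gamma> k))"

definition multi_indices :: "nat \<Rightarrow> nat \<Rightarrow> (nat \<Rightarrow> nat) set" where
  "multi_indices n d = {\<gamma>. (\<forall>k. n \<le> k \<longrightarrow> \<gamma> k = 0) \<and> (\<Sum>k<n. \<gamma> k) = d}"

definition softmax_type :: "nat \<Rightarrow> nat \<Rightarrow> (nat \<Rightarrow> real) \<Rightarrow> (nat \<Rightarrow> real) \<Rightarrow> real" where
  "softmax_type n j \<xi> z = exp (z j) / (\<Sum>k<n. \<xi> k * exp (z k))"

end

theory Submission
  imports Defs
begin

locale sm =
  fixes n m :: nat and \<xi> :: "nat \<Rightarrow> nat \<Rightarrow> real"
  assumes xi_nonneg: "\<And>i k. i < m \<Longrightarrow> k < n \<Longrightarrow> \<xi> i k \<ge> 0"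
    and xi_sum: "\<And>i. i < m \<Longrightarrow> (\<Sum>k<n. \<xi> i k) = 1"
begin

definition Dn :: "nat \<Rightarrow> (nat \<Rightarrow> real) \<Rightarrow> real" where
  "Dn i z = (\<Sum>k<n. \<xi> i k * exp (z k))"

definition Mon :: "(nat \<Rightarrow> nat) \<Rightarrow> (nat \<Rightarrow> nat) \<Rightarrow> (nat \<Rightarrow> real) \<Rightarrow> real" where
  "Mon \<alpha> \<beta> z = exp ((\<Sum>k<n. real (\<alpha> k) * z k) - (\<Sum>i<m. real (\<beta> i) * ln (Dn i z)))"

definition gg :: "nat \<Rightarrow> (nat \<Rightarrow> nat) \<Rightarrow> (nat \<Rightarrow> nat) \<Rightarrow> (nat \<Rightarrow> real) \<Rightarrow> real" where
  "gg l \<alpha> \<beta> z = real (\<alpha> l) - (\<Sum>i<m. real (\<beta> i) * (\<xi> i l * exp (z l) / Dn i z))"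

lemma Dn_pos: "i < m \<Longrightarrow> Dn i z > 0"
proof -
  assume i: "i < m"
  have "(\<Sum>k<n. \<xi> i k) = 1" using xi_sum[OF i] .
  then obtain k where k: "k < n" "\<xi> i k \<noteq> 0"
    by (metis (mono_tags, lifting) sum.neutral zero_neq_one lessThan_iff)
  then have pos: "\<xi> i k * exp (z k) > 0" using xi_nonneg[OF i k(1)] by simp
  have "\<xi> i k * exp (z k) \<le> (\<Sum>k<n. \<xi> i k * exp (z k))"
    by (rule member_le_sum) (use k xi_nonneg[OF i] in auto)
  with pos show ?thesis unfolding Dn_def by linarith
qed

lemma upd_deriv: "((\<lambda>t. (z(l:=t)) k) has_real_derivative (if k = l then 1 else 0)) (at x)"
  by (cases "k = l") (auto intro!: derivative_eq_intros)

lemma Dn_deriv: "l < n \<Longrightarrow> ((\<lambda>t. Dn i (z(l:=t))) has_real_derivative \<xi> i l * exp x) (at x)"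
proof -
  assume l: "l < n"
  have "((\<lambda>t. \<Sum>k<n. \<xi> i k * exp ((z(l:=t)) k)) has_real_derivative
      (\<Sum>k<n. \<xi> i k * (exp ((z(l:=x)) k) * (if k = l then 1 else 0)))) (at x)"
    by (intro DERIV_sum DERIV_cmult DERIV_fun_exp upd_deriv)
  moreover have "(\<Sum>k<n. \<xi> i k * (exp ((z(l:=x)) k) * (if k = l then 1 else 0))) = \<xi> i l * exp x"
    using l by (simp add: if_distrib cong: if_cong)
  ultimately show ?thesis unfolding Dn_def by simp
qed

lemma Mon_deriv:
  assumes l: "l < n"
  shows "((\<lambda>t. Mon \<alpha> \<beta> (z(l:=t))) has_real_derivative Mon \<alpha> \<beta> z * gg l \<alpha> \<beta> z) (at (z l))"
proof -
  have A: "((\<lambda>t. \<Sum>k<n. real (\<alpha> k) * (z(l:=t)) k) has_real_derivative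
      (\<Sum>k<n. real (\<alpha> k) * (if k = l then 1 else 0))) (at (z l))"
    by (intro DERIV_sum DERIV_cmult upd_deriv)
  have A': "(\<Sum>k<n. real (\<alpha> k) * (if k = l then 1 else 0)) = real (\<alpha> l)"
    using l by (simp add: if_distrib cong: if_cong)
  have B: "((\<lambda>t. \<Sum>i<m. real (\<beta> i) * ln (Dn i (z(l:=t)))) has_real_derivative
      (\<Sum>i<m. real (\<beta> i) * (inverse (Dn i (z(l:=z l))) * (\<xi> i l * exp (z l))))) (at (z l))"
  proof (intro DERIV_sum DERIV_cmult)
    fix i assume i: "i \<in> {..<m}"
    show "((\<lambda>t. ln (Dn i (z(l:=t)))) has_real_derivative
        inverse (Dn i (z(l:=z l))) * (\<xi> i l * exp (z l))) (at (z l))"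
      by (rule DERIV_chain2[OF DERIV_ln Dn_deriv[OF l]]) (use Dn_pos i in auto)
  qed
  have B': "(\<Sum>i<m. real (\<beta> i) * (inverse (Dn i (z(l:=z l))) * (\<xi> i l * exp (z l))))
      = (\<Sum>i<m. real (\<beta> i) * (\<xi> i l * exp (z l) / Dn i z))"
    by (simp add: field_simps)
  have "((\<lambda>t. Mon \<alpha> \<beta> (z(l:=t))) has_real_derivative
      exp ((\<Sum>k<n. real (\<alpha> k) * (z(l:=z l)) k) - (\<Sum>i<m. real (\<beta> i) * ln (Dn i (z(l:=z l)))))
      * (real (\<alpha> l) - (\<Sum>i<m. real (\<beta> i) * (\<xi> i l * exp (z l) / Dn i z)))) (at (z l))"
    unfolding Mon_def using DERIV_fun_exp[OF DERIV_diff[OF A B]] A' B' by simp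
  then show ?thesis by (simp add: Mon_def gg_def)
qed

lemma Mon_shift:
  assumes l: "l < n" and i: "i < m"
  shows "Mon (\<alpha>(l := Suc (\<alpha> l))) (\<beta>(i := Suc (\<beta> i))) z = Mon \<alpha> \<beta> z * (exp (z l) / Dn i z)"
proof -
  have s1: "(\<Sum>k<n. real ((\<alpha>(l := Suc (\<alpha> l))) k) * z k) = (\<Sum>k<n. real (\<alpha> k) * z k) + z l"
  proof -
    have "(\<Sum>k<n. real ((\<alpha>(l := Suc (\<alpha> l))) k) * z k) = (\<Sum>k<n. real (\<alpha> k) * z k + (if k = l then z k else 0))"
      by (intro sum.cong) (auto simp: algebra_simps)
    also have "\<dots> = (\<Sum>k<n. real (\<alpha> k) * z k) + z l" using l by (simp add: sum.distrib)
    finally show ?thesis .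
  qed
  have s2: "(\<Sum>j<m. real ((\<beta>(i := Suc (\<beta> i))) j) * ln (Dn j z)) = (\<Sum>j<m. real (\<beta> j) * ln (Dn j z)) + ln (Dn i z)"
  proof -
    have "(\<Sum>j<m. real ((\<beta>(i := Suc (\<beta> i))) j) * ln (Dn j z)) = (\<Sum>j<m. real (\<beta> j) * ln (Dn j z) + (if j = i then ln (Dn j z) else 0))"
      by (intro sum.cong) (auto simp: algebra_simps)
    also have "\<dots> = (\<Sum>j<m. real (\<beta> j) * ln (Dn j z)) + ln (Dn i z)" using i by (simp add: sum.distrib)
    finally show ?thesis .
  qed
  show ?thesis unfolding Mon_def s1 s2
    using Dn_pos[OF i, of z] by (simp add: exp_diff exp_add)
qed

type_synonym poly = "(real \<times> (nat \<Rightarrow> nat) \<times> (nat \<Rightarrow> nat)) list"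

definition ev :: "poly \<Rightarrow> (nat \<Rightarrow> real) \<Rightarrow> real" where
  "ev P z = sum_list (map (\<lambda>(c,\<alpha>,\<beta>). c * Mon \<alpha> \<beta> z) P)"

definition dmon :: "nat \<Rightarrow> real \<times> (nat \<Rightarrow> nat) \<times> (nat \<Rightarrow> nat) \<Rightarrow> poly" where
  "dmon l = (\<lambda>(c,\<alpha>,\<beta>). (c * real (\<alpha> l), \<alpha>, \<beta>) #
      map (\<lambda>i. (- c * real (\<beta> i) * \<xi> i l, \<alpha>(l := Suc (\<alpha> l)), \<beta>(i := Suc (\<beta> i)))) [0..<m])"

definition dp :: "nat \<Rightarrow> poly \<Rightarrow> poly" where
  "dp l P = concat (map (dmon l) P)"

lemma ev_Nil[simp]: "ev [] z = 0" by (simp add: ev_def)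
lemma ev_Cons[simp]: "ev ((c,\<alpha>,\<beta>) # P) z = c * Mon \<alpha> \<beta> z + ev P z" by (simp add: ev_def)
lemma ev_append[simp]: "ev (P @ Q) z = ev P z + ev Q z" by (simp add: ev_def)
lemma dp_Nil[simp]: "dp l [] = []" by (simp add: dp_def)
lemma dp_Cons: "dp l (x # P) = dmon l x @ dp l P" by (simp add: dp_def)
lemma dp_append[simp]: "dp l (P @ Q) = dp l P @ dp l Q" by (simp add: dp_def)

lemma ev_map: "ev (map f xs) z = (\<Sum>x\<leftarrow>xs. (case f x of (c,\<alpha>,\<beta>) \<Rightarrow> c * Mon \<alpha> \<beta> z))"
  by (induction xs) (auto simp: ev_def split: prod.splits)

lemma ev_dmon:
  assumes l: "l < n"
  shows "ev (dmon l (c,\<alpha>,\<beta>)) z = c * Mon \<alpha> \<beta> z * gg l \<alpha> \<beta> z"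
proof -
  have "ev (dmon l (c,\<alpha>,\<beta>)) z = c * real (\<alpha> l) * Mon \<alpha> \<beta> z
      + (\<Sum>i\<leftarrow>[0..<m]. - c * real (\<beta> i) * \<xi> i l * Mon (\<alpha>(l := Suc (\<alpha> l))) (\<beta>(i := Suc (\<beta> i))) z)"
    by (simp add: dmon_def ev_map)
  also have "(\<Sum>i\<leftarrow>[0..<m]. - c * real (\<beta> i) * \<xi> i l * Mon (\<alpha>(l := Suc (\<alpha> l))) (\<beta>(i := Suc (\<beta> i))) z)
      = (\<Sum>i<m. - c * real (\<beta> i) * \<xi> i l * (Mon \<alpha> \<beta> z * (exp (z l) / Dn i z)))"
    by (simp add: sum_list_distinct_conv_sum_set atLeast0LessThan Mon_shift[OF l])
  also have "\<dots> = - (c * Mon \<alpha> \<beta> z) * (\<Sum>i<m. real (\<beta> i) * (\<xi> i l * exp (z l) / Dn i z))"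
    by (simp add: sum_distrib_left algebra_simps)
  finally show ?thesis by (simp add: gg_def algebra_simps)
qed

lemma ev_dp: "l < n \<Longrightarrow> ev (dp l P) z = (\<Sum>(c,\<alpha>,\<beta>)\<leftarrow>P. c * Mon \<alpha> \<beta> z * gg l \<alpha> \<beta> z)"
  by (induction P) (auto simp: dp_Cons ev_dmon)

lemma ev_deriv:
  assumes l: "l < n"
  shows "((\<lambda>t. ev P (z(l:=t))) has_real_derivative ev (dp l P) z) (at (z l))"
  unfolding ev_dp[OF l]
proof (induction P)
  case Nil then show ?case by (simp add: ev_def)
next
  case (Cons x P)
  obtain c \<alpha> \<beta> where x: "x = (c,\<alpha>,\<beta>)" by (cases x) auto
  have "((\<lambda>t. c * Mon \<alpha> \<beta> (z(l:=t)) + ev P (z(l:=t))) has_real_derivative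
      c * (Mon \<alpha> \<beta> z * gg l \<alpha> \<beta> z) + (\<Sum>(c,\<alpha>,\<beta>)\<leftarrow>P. c * Mon \<alpha> \<beta> z * gg l \<alpha> \<beta> z)) (at (z l))"
    by (intro DERIV_add DERIV_cmult Mon_deriv[OF l] Cons)
  then show ?case unfolding x ev_Cons by (simp add: mult.assoc)
qed

lemma partial_ev: "l < n \<Longrightarrow> partial l (ev P) = ev (dp l P)"
  unfolding partial_def
  by (rule ext, rule DERIV_imp_deriv) (use ev_deriv in auto)

lemma gg_shift:
  assumes p: "p < n" and i: "i < m"
  shows "gg l (\<alpha>(p := Suc (\<alpha> p))) (\<beta>(i := Suc (\<beta> i))) z
     = gg l \<alpha> \<beta> z + (if l = p then 1 else 0) - \<xi> i l * exp (z l) / Dn i z"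
proof -
  have "(\<Sum>j<m. real ((\<beta>(i := Suc (\<beta> i))) j) * (\<xi> j l * exp (z l) / Dn j z))
      = (\<Sum>j<m. real (\<beta> j) * (\<xi> j l * exp (z l) / Dn j z) + (if j = i then \<xi> j l * exp (z l) / Dn j z else 0))"
    by (intro sum.cong refl) (simp add: of_nat_Suc distrib_right add_divide_distrib)
  also have "\<dots> = (\<Sum>j<m. real (\<beta> j) * (\<xi> j l * exp (z l) / Dn j z)) + \<xi> i l * exp (z l) / Dn i z"
    using i by (simp add: sum.distrib)
  finally show ?thesis unfolding gg_def by (auto simp: add_divide_distrib)
qed

lemma ev_dp2:
  assumes l: "l < n" and p: "p < n"
  shows "ev (dp l (dp p [(c,\<alpha>,\<beta>)])) z = c * Mon \<alpha> \<beta> z *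
     (gg p \<alpha> \<beta> z * gg l \<alpha> \<beta> z
      - (if l = p then (\<Sum>i<m. real (\<beta> i) * (\<xi> i p * exp (z p) / Dn i z)) else 0)
      + (\<Sum>i<m. real (\<beta> i) * (\<xi> i p * exp (z p) / Dn i z) * (\<xi> i l * exp (z l) / Dn i z)))"
proof -
  define M where "M = Mon \<alpha> \<beta> z"
  define a where "a i = \<xi> i p * exp (z p) / Dn i z" for i
  define b where "b i = \<xi> i l * exp (z l) / Dn i z" for i
  define G where "G = gg l \<alpha> \<beta> z"
  define \<delta> where "\<delta> = (if l = p then 1 else (0::real))"
  have "ev (dp l (dp p [(c,\<alpha>,\<beta>)])) z = c * real (\<alpha> p) * M * G
     + (\<Sum>i\<leftarrow>[0..<m]. - c * real (\<beta> i) * \<xi> i p * Mon (\<alpha>(p := Suc (\<alpha> p))) (\<beta>(i := Suc (\<beta> i))) z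
          * gg l (\<alpha>(p := Suc (\<alpha> p))) (\<beta>(i := Suc (\<beta> i))) z)"
  proof -
    have "dp p [(c,\<alpha>,\<beta>)] = (c * real (\<alpha> p), \<alpha>, \<beta>) #
      map (\<lambda>i. (- c * real (\<beta> i) * \<xi> i p, \<alpha>(p := Suc (\<alpha> p)), \<beta>(i := Suc (\<beta> i)))) [0..<m]"
      by (simp add: dp_def dmon_def)
    then show ?thesis by (simp add: ev_dp[OF l] M_def G_def o_def)
  qed
  also have "(\<Sum>i\<leftarrow>[0..<m]. - c * real (\<beta> i) * \<xi> i p * Mon (\<alpha>(p := Suc (\<alpha> p))) (\<beta>(i := Suc (\<beta> i))) z
          * gg l (\<alpha>(p := Suc (\<alpha> p))) (\<beta>(i := Suc (\<beta> i))) z)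
     = (\<Sum>i<m. - c * M * (real (\<beta> i) * a i * (G + \<delta> - b i)))"
  proof -
    have "(\<Sum>i\<leftarrow>[0..<m]. - c * real (\<beta> i) * \<xi> i p * Mon (\<alpha>(p := Suc (\<alpha> p))) (\<beta>(i := Suc (\<beta> i))) z
          * gg l (\<alpha>(p := Suc (\<alpha> p))) (\<beta>(i := Suc (\<beta> i))) z)
      = (\<Sum>i<m. - c * real (\<beta> i) * \<xi> i p * Mon (\<alpha>(p := Suc (\<alpha> p))) (\<beta>(i := Suc (\<beta> i))) z
          * gg l (\<alpha>(p := Suc (\<alpha> p))) (\<beta>(i := Suc (\<beta> i))) z)"
      by (simp add: sum_list_distinct_conv_sum_set atLeast0LessThan)
    also have "\<dots> = (\<Sum>i<m. - c * M * (real (\<beta> i) * a i * (G + \<delta> - b i)))"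
    proof (rule sum.cong[OF refl])
      fix i assume "i \<in> {..<m}" then have i: "i < m" by simp
      show "- c * real (\<beta> i) * \<xi> i p * Mon (\<alpha>(p := Suc (\<alpha> p))) (\<beta>(i := Suc (\<beta> i))) z
          * gg l (\<alpha>(p := Suc (\<alpha> p))) (\<beta>(i := Suc (\<beta> i))) z = - c * M * (real (\<beta> i) * a i * (G + \<delta> - b i))"
        unfolding Mon_shift[OF p i] gg_shift[OF p i] M_def a_def b_def G_def \<delta>_def by simp
    qed
    finally show ?thesis .
  qed
  also have "\<dots> = - c * M * ((G + \<delta>) * (\<Sum>i<m. real (\<beta> i) * a i) - (\<Sum>i<m. real (\<beta> i) * a i * b i))"
  proof -
    have "(\<Sum>i<m. - c * M * (real (\<beta> i) * a i * (G + \<delta> - b i)))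
       = (\<Sum>i<m. (- c * M * (G + \<delta>)) * (real (\<beta> i) * a i) + (c * M) * (real (\<beta> i) * a i * b i))"
      by (rule sum.cong[OF refl]) (simp add: algebra_simps)
    also have "\<dots> = (- c * M * (G + \<delta>)) * (\<Sum>i<m. real (\<beta> i) * a i) + (c * M) * (\<Sum>i<m. real (\<beta> i) * a i * b i)"
      by (simp only: sum.distrib sum_distrib_left)
    finally show ?thesis by (simp add: algebra_simps)
  qed
  finally have e: "ev (dp l (dp p [(c,\<alpha>,\<beta>)])) z = c * real (\<alpha> p) * M * G
      - c * M * ((G + \<delta>) * (\<Sum>i<m. real (\<beta> i) * a i) - (\<Sum>i<m. real (\<beta> i) * a i * b i))" by simp
  have gp: "gg p \<alpha> \<beta> z = real (\<alpha> p) - (\<Sum>i<m. real (\<beta> i) * a i)" by (simp add: gg_def a_def)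
  have A_eq: "(\<Sum>i<m. real (\<beta> i) * (\<xi> i p * exp (z p) / Dn i z)) = (\<Sum>i<m. real (\<beta> i) * a i)"
    by (simp add: a_def)
  have B_eq: "(\<Sum>i<m. real (\<beta> i) * (\<xi> i p * exp (z p) / Dn i z) * (\<xi> i l * exp (z l) / Dn i z))
     = (\<Sum>i<m. real (\<beta> i) * a i * b i)"
    by (simp add: a_def b_def)
  show ?thesis unfolding e gp A_eq B_eq G_def[symmetric] M_def[symmetric]
    by (cases "l = p") (simp_all add: \<delta>_def algebra_simps)
qed

lemma ev_comm1:
  assumes l: "l < n" and p: "p < n"
  shows "ev (dp l (dp p [x])) z = ev (dp p (dp l [x])) z"
proof -
  obtain c \<alpha> \<beta> where x: "x = (c,\<alpha>,\<beta>)" by (cases x) auto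
  have "(\<Sum>i<m. real (\<beta> i) * (\<xi> i p * exp (z p) / Dn i z) * (\<xi> i l * exp (z l) / Dn i z))
      = (\<Sum>i<m. real (\<beta> i) * (\<xi> i l * exp (z l) / Dn i z) * (\<xi> i p * exp (z p) / Dn i z))"
    by (simp add: algebra_simps)
  then show ?thesis unfolding x ev_dp2[OF l p] ev_dp2[OF p l] by (simp add: algebra_simps)
qed

lemma dp_single: "dp l (x # P) = dp l [x] @ dp l P"
  by (simp add: dp_Cons)

lemma ev_comm:
  assumes l: "l < n" and p: "p < n"
  shows "ev (dp l (dp p P)) = ev (dp p (dp l P))"
proof
  fix z show "ev (dp l (dp p P)) z = ev (dp p (dp l P)) z"
  proof (induction P)
    case Nil then show ?case by simp
  next
    case (Cons x P)
    have "ev (dp l (dp p (x # P))) z = ev (dp l (dp p [x])) z + ev (dp l (dp p P)) z"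
      by (subst dp_single) simp
    moreover have "ev (dp p (dp l (x # P))) z = ev (dp p (dp l [x])) z + ev (dp p (dp l P)) z"
      by (subst dp_single) simp
    ultimately show ?case using Cons ev_comm1[OF l p] by simp
  qed
qed

lemma funpow_partial: "k < n \<Longrightarrow> (partial k ^^ a) (ev P) = ev ((dp k ^^ a) P)"
proof (induction a arbitrary: P)
  case 0 then show ?case by simp
next
  case (Suc a)
  have "(partial k ^^ Suc a) (ev P) = (partial k ^^ a) (partial k (ev P))"
    by (simp only: funpow_Suc_right o_apply)
  also have "\<dots> = ev ((dp k ^^ a) (dp k P))" using Suc by (simp add: partial_ev)
  also have "\<dots> = ev ((dp k ^^ Suc a) P)" by (simp only: funpow_Suc_right o_apply)
  finally show ?case .
qed

lemma ev_cong_dp: "ev A = ev B \<Longrightarrow> k < n \<Longrightarrow> ev ((dp k ^^ a) A) = ev ((dp k ^^ a) B)"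
  by (metis funpow_partial)

lemma ev_comm_pow:
  assumes k: "k < n" and l: "l < n"
  shows "ev ((dp k ^^ a) (dp l P)) = ev (dp l ((dp k ^^ a) P))"
proof (induction a arbitrary: P)
  case 0 then show ?case by simp
next
  case (Suc a)
  have "ev ((dp k ^^ Suc a) (dp l P)) = ev ((dp k ^^ a) (dp k (dp l P)))"
    by (simp only: funpow_Suc_right o_apply)
  also have "\<dots> = ev ((dp k ^^ a) (dp l (dp k P)))"
    by (rule ev_cong_dp[OF ev_comm[OF k l] k])
  also have "\<dots> = ev (dp l ((dp k ^^ a) (dp k P)))" by (rule Suc)
  also have "\<dots> = ev (dp l ((dp k ^^ Suc a) P))" by (simp only: funpow_Suc_right o_apply)
  finally show ?case .
qed

lemma mp_Suc: "mixed_partial (Suc N) \<gamma> F = mixed_partial N \<gamma> ((partial N ^^ \<gamma> N) F)"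
  by (simp add: mixed_partial_def)

lemma mp_cong: "(\<And>k. k < N \<Longrightarrow> \<gamma> k = \<gamma>' k) \<Longrightarrow> mixed_partial N \<gamma> F = mixed_partial N \<gamma>' F"
  unfolding mixed_partial_def by (intro foldr_cong) auto

lemma mp_zero: "(\<And>k. k < N \<Longrightarrow> \<gamma> k = 0) \<Longrightarrow> mixed_partial N \<gamma> F = F"
proof -
  assume "\<And>k. k < N \<Longrightarrow> \<gamma> k = 0"
  then have "mixed_partial N \<gamma> F = mixed_partial N (\<lambda>_. 0) F" by (rule mp_cong)
  also have "\<dots> = F" by (induction N) (simp_all add: mp_Suc mixed_partial_def)
  finally show ?thesis .
qed

lemma mp_step:
  "N \<le> n \<Longrightarrow> l < N \<Longrightarrow> \<gamma> l > 0 \<Longrightarrow>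
   mixed_partial N \<gamma> (ev P) = mixed_partial N (\<gamma>(l := \<gamma> l - 1)) (ev (dp l P))"
proof (induction N arbitrary: P)
  case 0 then show ?case by simp
next
  case (Suc N)
  define \<gamma>' where "\<gamma>' = \<gamma>(l := \<gamma> l - 1)"
  have Nn: "N < n" using Suc by simp
  show ?case
  proof (cases "l = N")
    case True
    have "(partial N ^^ \<gamma> N) (ev P) = ev ((dp N ^^ \<gamma> N) P)" by (rule funpow_partial[OF Nn])
    also have "(dp N ^^ \<gamma> N) P = (dp N ^^ \<gamma>' N) (dp N P)"
    proof -
      have "\<gamma> N = Suc (\<gamma>' N)" using Suc.prems True by (simp add: \<gamma>'_def)
      then show ?thesis by (simp only: funpow_Suc_right o_apply)
    qed
    also have "ev \<dots> = (partial N ^^ \<gamma>' N) (ev (dp N P))" by (rule funpow_partial[OF Nn, symmetric])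
    finally have e: "(partial N ^^ \<gamma> N) (ev P) = (partial N ^^ \<gamma>' N) (ev (dp N P))" .
    have "mixed_partial (Suc N) \<gamma> (ev P) = mixed_partial N \<gamma> ((partial N ^^ \<gamma>' N) (ev (dp N P)))"
      by (simp add: mp_Suc e)
    also have "\<dots> = mixed_partial N \<gamma>' ((partial N ^^ \<gamma>' N) (ev (dp N P)))"
      by (rule mp_cong) (simp add: \<gamma>'_def True)
    also have "\<dots> = mixed_partial (Suc N) \<gamma>' (ev (dp N P))" by (simp add: mp_Suc)
    finally show ?thesis by (simp only: \<gamma>'_def True)
  next
    case False
    then have lN: "l < N" using Suc.prems by simp
    have ln: "l < n" using Suc.prems by simp
    have "mixed_partial (Suc N) \<gamma> (ev P) = mixed_partial N \<gamma> (ev ((dp N ^^ \<gamma> N) P))"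
      by (simp add: mp_Suc funpow_partial[OF Nn])
    also have "\<dots> = mixed_partial N \<gamma>' (ev (dp l ((dp N ^^ \<gamma> N) P)))"
      unfolding \<gamma>'_def by (rule Suc.IH) (use Suc.prems lN in auto)
    also have "ev (dp l ((dp N ^^ \<gamma> N) P)) = ev ((dp N ^^ \<gamma>' N) (dp l P))"
      using ev_comm_pow[OF Nn ln] False by (simp add: \<gamma>'_def)
    also have "\<dots> = (partial N ^^ \<gamma>' N) (ev (dp l P))" by (rule funpow_partial[OF Nn, symmetric])
    also have "mixed_partial N \<gamma>' \<dots> = mixed_partial (Suc N) \<gamma>' (ev (dp l P))" by (simp add: mp_Suc)
    finally show ?thesis by (simp only: \<gamma>'_def)
  qed
qed

definition Bn :: "poly \<Rightarrow> real" where
  "Bn P = sum_list (map (\<lambda>(c,\<alpha>,\<beta>). \<bar>c\<bar>) P)"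

lemma Mon_zero: "Mon \<alpha> \<beta> (\<lambda>_. 0) = 1"
proof -
  have "(\<Sum>i<m. real (\<beta> i) * ln (Dn i (\<lambda>_. 0))) = 0"
    by (rule sum.neutral) (simp add: Dn_def xi_sum)
  then show ?thesis by (simp add: Mon_def)
qed

lemma ev_zero_bound: "\<bar>ev P (\<lambda>_. 0)\<bar> \<le> Bn P"
proof (induction P)
  case Nil then show ?case by (simp add: Bn_def)
next
  case (Cons x P)
  obtain c \<alpha> \<beta> where x: "x = (c,\<alpha>,\<beta>)" by (cases x) auto
  have "Bn (x # P) = \<bar>c\<bar> + Bn P" by (simp add: Bn_def x)
  then show ?case using Cons by (simp add: x Mon_zero)
qed

fun R :: "nat \<Rightarrow> (nat \<Rightarrow> nat) \<Rightarrow> poly \<Rightarrow> real" where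
  "R 0 \<gamma> P = Bn P"
| "R (Suc d) \<gamma> P = (\<Sum>l<n. real (\<gamma> l) / real (Suc d) * R d (\<gamma>(l := \<gamma> l - 1)) (dp l P))"

lemma claimA: "(\<Sum>k<n. \<gamma> k) = d \<Longrightarrow> \<bar>mixed_partial n \<gamma> (ev P) (\<lambda>_. 0)\<bar> \<le> R d \<gamma> P"
proof (induction d arbitrary: \<gamma> P)
  case 0
  then have "\<And>k. k < n \<Longrightarrow> \<gamma> k = 0" by simp
  then show ?case by (simp add: mp_zero ev_zero_bound)
next
  case (Suc d)
  define X where "X = \<bar>mixed_partial n \<gamma> (ev P) (\<lambda>_. 0)\<bar>"
  have "X = (\<Sum>l<n. real (\<gamma> l) / real (Suc d) * X)"
  proof -
    have "(\<Sum>l<n. real (\<gamma> l) / real (Suc d) * X) = real (\<Sum>l<n. \<gamma> l) / real (Suc d) * X"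
      by (simp add: sum_distrib_right sum_divide_distrib)
    then show ?thesis using Suc.prems by simp
  qed
  also have "\<dots> \<le> (\<Sum>l<n. real (\<gamma> l) / real (Suc d) * R d (\<gamma>(l := \<gamma> l - 1)) (dp l P))"
  proof (rule sum_mono)
    fix l assume "l \<in> {..<n}" then have l: "l < n" by simp
    show "real (\<gamma> l) / real (Suc d) * X \<le> real (\<gamma> l) / real (Suc d) * R d (\<gamma>(l := \<gamma> l - 1)) (dp l P)"
    proof (cases "\<gamma> l = 0")
      case True then show ?thesis by simp
    next
      case False
      have s: "(\<Sum>k<n. (\<gamma>(l := \<gamma> l - 1)) k) = d"
      proof -
        have "(\<Sum>k<n. (\<gamma>(l := \<gamma> l - 1)) k) = (\<Sum>k\<in>{..<n}-{l}. \<gamma> k) + (\<gamma> l - 1)"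
          using l by (simp add: sum.remove[of "{..<n}" l] add.commute)
        moreover have "(\<Sum>k<n. \<gamma> k) = (\<Sum>k\<in>{..<n}-{l}. \<gamma> k) + \<gamma> l"
          using l by (simp add: sum.remove[of "{..<n}" l] add.commute)
        ultimately show ?thesis using Suc.prems False by simp
      qed
      have "X = \<bar>mixed_partial n (\<gamma>(l := \<gamma> l - 1)) (ev (dp l P)) (\<lambda>_. 0)\<bar>"
        unfolding X_def using mp_step[of n l \<gamma> P] l False by simp
      also have "\<dots> \<le> R d (\<gamma>(l := \<gamma> l - 1)) (dp l P)" by (rule Suc.IH[OF s])
      finally show ?thesis by (intro mult_left_mono) auto
    qed
  qed
  finally show ?case by (simp add: X_def)
qed

lemma sum_upd_nat: "l < (N::nat) \<Longrightarrow> (\<Sum>k<N. (f(l:=v)) k) + f l = (\<Sum>k<N. f k) + (v::nat)"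
proof -
  assume l: "l < N"
  have a: "(\<Sum>k<N. (f(l:=v)) k) = (f(l:=v)) l + (\<Sum>k\<in>{..<N}-{l}. (f(l:=v)) k)"
    using l by (intro sum.remove) auto
  have b: "(\<Sum>k\<in>{..<N}-{l}. (f(l:=v)) k) = (\<Sum>k\<in>{..<N}-{l}. f k)" by (rule sum.cong) auto
  have c: "(\<Sum>k<N. f k) = f l + (\<Sum>k\<in>{..<N}-{l}. f k)" using l by (intro sum.remove) auto
  show ?thesis unfolding a b c by simp
qed

lemma finite_mi: "finite (multi_indices n d)"
proof (rule finite_subset)
  show "multi_indices n d \<subseteq> {f. \<forall>x. (x \<in> {..<n} \<longrightarrow> f x \<in> {..d}) \<and> (x \<notin> {..<n} \<longrightarrow> f x = 0)}"
  proof
    fix f assume f: "f \<in> multi_indices n d"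
    have "\<forall>x. (x \<in> {..<n} \<longrightarrow> f x \<in> {..d}) \<and> (x \<notin> {..<n} \<longrightarrow> f x = 0)"
    proof (intro allI conjI impI)
      fix x assume "x \<in> {..<n}"
      then have "f x \<le> (\<Sum>k<n. f k)" by (intro member_le_sum) auto
      then show "f x \<in> {..d}" using f by (simp add: multi_indices_def)
    next
      fix x assume "x \<notin> {..<n}" then show "f x = 0" using f by (simp add: multi_indices_def)
    qed
    then show "f \<in> {f. \<forall>x. (x \<in> {..<n} \<longrightarrow> f x \<in> {..d}) \<and> (x \<notin> {..<n} \<longrightarrow> f x = 0)}" by simp
  qed
  show "finite {f. \<forall>x. (x \<in> {..<n} \<longrightarrow> f x \<in> {..d}) \<and> (x \<notin> {..<n} \<longrightarrow> f x = (0::nat))}"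
    by (rule finite_set_of_finite_funs) auto
qed

lemma prod_fact_upd:
  assumes l: "l < n" and g: "\<gamma> l > 0"
  shows "(\<Prod>k<n. fact (\<gamma> k) :: real) = real (\<gamma> l) * (\<Prod>k<n. fact ((\<gamma>(l := \<gamma> l - 1)) k))"
proof -
  have "(\<Prod>k<n. fact (\<gamma> k) :: real) = fact (\<gamma> l) * (\<Prod>k\<in>{..<n}-{l}. fact (\<gamma> k))"
    using l by (simp add: prod.remove[of "{..<n}" l])
  moreover have "(\<Prod>k<n. fact ((\<gamma>(l := \<gamma> l - 1)) k) :: real) = fact (\<gamma> l - 1) * (\<Prod>k\<in>{..<n}-{l}. fact (\<gamma> k))"
    using l by (simp add: prod.remove[of "{..<n}" l])
  moreover have "(fact (\<gamma> l) :: real) = real (\<gamma> l) * fact (\<gamma> l - 1)" using g by (rule fact_reduce)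
  ultimately show ?thesis by simp
qed

lemma reidx:
  assumes l: "l < n"
  shows "(\<Sum>\<gamma>\<in>multi_indices n (Suc d). real (\<gamma> l) * h (\<gamma>(l := \<gamma> l - 1)) / (\<Prod>k<n. fact (\<gamma> k)))
       = (\<Sum>\<delta>\<in>multi_indices n d. h \<delta> / (\<Prod>k<n. fact (\<delta> k)))"
proof -
  let ?S = "{\<gamma>\<in>multi_indices n (Suc d). \<gamma> l > 0}"
  have "(\<Sum>\<gamma>\<in>multi_indices n (Suc d). real (\<gamma> l) * h (\<gamma>(l := \<gamma> l - 1)) / (\<Prod>k<n. fact (\<gamma> k)))
      = (\<Sum>\<gamma>\<in>?S. real (\<gamma> l) * h (\<gamma>(l := \<gamma> l - 1)) / (\<Prod>k<n. fact (\<gamma> k)))"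
    by (rule sum.mono_neutral_right[OF finite_mi]) auto
  also have "\<dots> = (\<Sum>\<delta>\<in>multi_indices n d. h \<delta> / (\<Prod>k<n. fact (\<delta> k)))"
  proof (rule sum.reindex_bij_witness[where j = "\<lambda>\<gamma>. \<gamma>(l := \<gamma> l - 1)" and i = "\<lambda>\<delta>. \<delta>(l := Suc (\<delta> l))"])
    fix \<gamma> assume g: "\<gamma> \<in> ?S"
    then show "\<gamma>(l := \<gamma> l - 1, l := Suc ((\<gamma>(l := \<gamma> l - 1)) l)) = \<gamma>" by auto
    show "\<gamma>(l := \<gamma> l - 1) \<in> multi_indices n d"
    proof -
      have "(\<Sum>k<n. (\<gamma>(l := \<gamma> l - 1)) k) + \<gamma> l = (\<Sum>k<n. \<gamma> k) + (\<gamma> l - 1)"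
        by (rule sum_upd_nat[OF l])
      then show ?thesis using g l by (auto simp: multi_indices_def)
    qed
    show "h (\<gamma>(l := \<gamma> l - 1)) / (\<Prod>k<n. fact ((\<gamma>(l := \<gamma> l - 1)) k)) =
        real (\<gamma> l) * h (\<gamma>(l := \<gamma> l - 1)) / (\<Prod>k<n. fact (\<gamma> k))"
      using prod_fact_upd[OF l, of \<gamma>] g by simp
  next
    fix \<delta> assume dl: "\<delta> \<in> multi_indices n d"
    show "\<delta>(l := Suc (\<delta> l), l := (\<delta>(l := Suc (\<delta> l))) l - 1) = \<delta>" by auto
    have "(\<Sum>k<n. (\<delta>(l := Suc (\<delta> l))) k) + \<delta> l = (\<Sum>k<n. \<delta> k) + Suc (\<delta> l)"
      by (rule sum_upd_nat[OF l])
    then show "\<delta>(l := Suc (\<delta> l)) \<in> ?S" using dl l by (auto simp: multi_indices_def)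
  qed
  finally show ?thesis .
qed

definition Q :: "nat \<Rightarrow> poly \<Rightarrow> real" where
  "Q d P = (\<Sum>\<gamma>\<in>multi_indices n d. R d \<gamma> P / (\<Prod>k<n. fact (\<gamma> k)))"

lemma Q_Suc: "Q (Suc d) P = (\<Sum>l<n. Q d (dp l P)) / real (Suc d)"
proof -
  have "Q (Suc d) P = (\<Sum>\<gamma>\<in>multi_indices n (Suc d). \<Sum>l<n.
      (real (\<gamma> l) * R d (\<gamma>(l := \<gamma> l - 1)) (dp l P) / (\<Prod>k<n. fact (\<gamma> k))) / real (Suc d))"
    unfolding Q_def R.simps sum_divide_distrib
  proof (intro sum.cong refl)
    fix \<gamma> l
    have e: "\<And>a b c e. (a / b * c) / e = (a * c / e) / (b::real)" by simp
    show "real (\<gamma> l) / real (Suc d) * R d (\<gamma>(l := \<gamma> l - 1)) (dp l P) / (\<Prod>k<n. fact (\<gamma> k)) =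
        real (\<gamma> l) * R d (\<gamma>(l := \<gamma> l - 1)) (dp l P) / (\<Prod>k<n. fact (\<gamma> k)) / real (Suc d)"
      by (rule e)
  qed
  also have "\<dots> = (\<Sum>l<n. \<Sum>\<gamma>\<in>multi_indices n (Suc d).
      (real (\<gamma> l) * R d (\<gamma>(l := \<gamma> l - 1)) (dp l P) / (\<Prod>k<n. fact (\<gamma> k))) / real (Suc d))"
    by (rule sum.swap)
  also have "\<dots> = (\<Sum>l<n. (\<Sum>\<gamma>\<in>multi_indices n (Suc d).
      real (\<gamma> l) * R d (\<gamma>(l := \<gamma> l - 1)) (dp l P) / (\<Prod>k<n. fact (\<gamma> k))) / real (Suc d))"
    by (simp add: sum_divide_distrib)
  also have "\<dots> = (\<Sum>l<n. Q d (dp l P) / real (Suc d))"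
    unfolding Q_def
  proof (intro sum.cong refl)
    fix l assume "l \<in> {..<n}" then have l: "l < n" by simp
    have e: "(\<Sum>\<gamma>\<in>multi_indices n (Suc d). real (\<gamma> l) * R d (\<gamma>(l := \<gamma> l - 1)) (dp l P) / (\<Prod>k<n. fact (\<gamma> k)))
       = (\<Sum>\<delta>\<in>multi_indices n d. R d \<delta> (dp l P) / (\<Prod>k<n. fact (\<delta> k)))"
      by (rule reidx[OF l])
    show "(\<Sum>\<gamma>\<in>multi_indices n (Suc d). real (\<gamma> l) * R d (\<gamma>(l := \<gamma> l - 1)) (dp l P) / (\<Prod>k<n. fact (\<gamma> k))) / real (Suc d)
       = (\<Sum>\<delta>\<in>multi_indices n d. R d \<delta> (dp l P) / (\<Prod>k<n. fact (\<delta> k))) / real (Suc d)"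
      by (simp only: e)
  qed
  finally show ?thesis by (simp add: sum_divide_distrib)
qed

definition sig :: "real \<times> (nat \<Rightarrow> nat) \<times> (nat \<Rightarrow> nat) \<Rightarrow> real" where
  "sig = (\<lambda>(c,\<alpha>,\<beta>). real (\<Sum>k<n. \<alpha> k) + real (\<Sum>i<m. \<beta> i))"

lemma Bn_Cons[simp]: "Bn ((c,\<alpha>,\<beta>) # P) = \<bar>c\<bar> + Bn P" by (simp add: Bn_def)
lemma Bn_append[simp]: "Bn (P @ P2) = Bn P + Bn P2" by (simp add: Bn_def)
lemma Bn_nonneg: "Bn P \<ge> 0"
  by (induction P) (auto simp: Bn_def intro!: sum_list_nonneg)

lemma Bn_dmon: "l < n \<Longrightarrow> Bn (dmon l (c,\<alpha>,\<beta>)) = \<bar>c\<bar> * real (\<alpha> l) + \<bar>c\<bar> * (\<Sum>i<m. real (\<beta> i) * \<xi> i l)"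
proof -
  assume l: "l < n"
  have "Bn (dmon l (c,\<alpha>,\<beta>)) = \<bar>c\<bar> * real (\<alpha> l) + (\<Sum>i\<leftarrow>[0..<m]. \<bar>c * real (\<beta> i) * \<xi> i l\<bar>)"
    by (simp add: dmon_def Bn_def o_def abs_mult)
  also have "(\<Sum>i\<leftarrow>[0..<m]. \<bar>c * real (\<beta> i) * \<xi> i l\<bar>) = (\<Sum>i<m. \<bar>c\<bar> * (real (\<beta> i) * \<xi> i l))"
  proof -
    have "(\<Sum>i\<leftarrow>[0..<m]. \<bar>c * real (\<beta> i) * \<xi> i l\<bar>) = (\<Sum>i<m. \<bar>c * real (\<beta> i) * \<xi> i l\<bar>)"
      by (simp add: sum_list_distinct_conv_sum_set atLeast0LessThan)
    also have "\<dots> = (\<Sum>i<m. \<bar>c\<bar> * (real (\<beta> i) * \<xi> i l))"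
    proof (rule sum.cong[OF refl])
      fix i assume "i \<in> {..<m}"
      then have "\<xi> i l \<ge> 0" using xi_nonneg l by simp
      then show "\<bar>c * real (\<beta> i) * \<xi> i l\<bar> = \<bar>c\<bar> * (real (\<beta> i) * \<xi> i l)" by (simp add: abs_mult)
    qed
    finally show ?thesis .
  qed
  finally show ?thesis by (simp add: sum_distrib_left)
qed

lemma Bn_dmon_sum: "(\<Sum>l<n. Bn (dmon l x)) = (case x of (c,\<alpha>,\<beta>) \<Rightarrow> \<bar>c\<bar>) * sig x"
proof -
  obtain c \<alpha> \<beta> where x: "x = (c,\<alpha>,\<beta>)" by (cases x) auto
  have "(\<Sum>l<n. Bn (dmon l x)) = (\<Sum>l<n. \<bar>c\<bar> * real (\<alpha> l) + \<bar>c\<bar> * (\<Sum>i<m. real (\<beta> i) * \<xi> i l))"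
    unfolding x by (intro sum.cong refl) (simp add: Bn_dmon)
  also have "\<dots> = \<bar>c\<bar> * real (\<Sum>l<n. \<alpha> l) + \<bar>c\<bar> * (\<Sum>i<m. real (\<beta> i) * (\<Sum>l<n. \<xi> i l))"
    by (simp add: sum.distrib sum_distrib_left sum.swap[of _ "{..<n}" "{..<m}"])
  also have "(\<Sum>i<m. real (\<beta> i) * (\<Sum>l<n. \<xi> i l)) = real (\<Sum>i<m. \<beta> i)"
    by (simp add: xi_sum)
  finally show ?thesis by (simp add: x sig_def algebra_simps)
qed

lemma Bn_dp_sum: "(\<forall>x\<in>set P. sig x \<le> s) \<Longrightarrow> (\<Sum>l<n. Bn (dp l P)) \<le> s * Bn P"
proof (induction P)
  case Nil then show ?case by (simp add: Bn_def)
next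
  case (Cons x P)
  obtain c \<alpha> \<beta> where x: "x = (c,\<alpha>,\<beta>)" by (cases x) auto
  have "(\<Sum>l<n. Bn (dp l (x # P))) = (\<Sum>l<n. Bn (dmon l x)) + (\<Sum>l<n. Bn (dp l P))"
    by (simp add: dp_Cons sum.distrib)
  also have "\<dots> \<le> \<bar>c\<bar> * s + s * Bn P"
  proof (rule add_mono)
    show "(\<Sum>l<n. Bn (dmon l x)) \<le> \<bar>c\<bar> * s"
      unfolding Bn_dmon_sum using Cons.prems by (simp add: x mult_left_mono)
    show "(\<Sum>l<n. Bn (dp l P)) \<le> s * Bn P" using Cons by simp
  qed
  finally show ?case by (simp add: x algebra_simps)
qed

lemma sig_dp:
  assumes l: "l < n" and P: "\<forall>x\<in>set P. sig x \<le> s" and y: "y \<in> set (dp l P)"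
  shows "sig y \<le> s + 2"
proof -
  obtain x where x: "x \<in> set P" and yx: "y \<in> set (dmon l x)" using y by (auto simp: dp_def)
  obtain c \<alpha> \<beta> where xe: "x = (c,\<alpha>,\<beta>)" by (cases x) auto
  have sx: "sig x \<le> s" using P x by auto
  from yx consider "y = (c * real (\<alpha> l), \<alpha>, \<beta>)"
    | i where "i < m" "y = (- c * real (\<beta> i) * \<xi> i l, \<alpha>(l := Suc (\<alpha> l)), \<beta>(i := Suc (\<beta> i)))"
    by (auto simp: dmon_def xe)
  then show ?thesis
  proof cases
    case 1 then show ?thesis using sx by (simp add: sig_def xe)
  next
    case (2 i)
    have a: "(\<Sum>k<n. (\<alpha>(l := Suc (\<alpha> l))) k) + \<alpha> l = (\<Sum>k<n. \<alpha> k) + Suc (\<alpha> l)"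
      by (rule sum_upd_nat[OF l])
    have b: "(\<Sum>k<m. (\<beta>(i := Suc (\<beta> i))) k) + \<beta> i = (\<Sum>k<m. \<beta> k) + Suc (\<beta> i)"
      by (rule sum_upd_nat[OF 2(1)])
    have a': "(\<Sum>k<n. (\<alpha>(l := Suc (\<alpha> l))) k) = Suc (\<Sum>k<n. \<alpha> k)" using a by simp
    have b': "(\<Sum>k<m. (\<beta>(i := Suc (\<beta> i))) k) = Suc (\<Sum>k<m. \<beta> k)" using b by simp
    have "sig y = sig x + 2" unfolding sig_def xe 2(2) prod.case a' b' by simp
    then show ?thesis using sx by simp
  qed
qed

lemma mi_zero: "multi_indices n 0 = {\<lambda>_. 0}"
proof safe
  fix \<gamma> assume g: "\<gamma> \<in> multi_indices n 0"
  show "\<gamma> = (\<lambda>_. 0)"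
  proof
    fix k show "\<gamma> k = 0" using g by (cases "k < n") (auto simp: multi_indices_def)
  qed
qed (simp add: multi_indices_def)

lemma claimB:
  "0 \<le> s \<Longrightarrow> (\<forall>x\<in>set P. sig x \<le> s) \<Longrightarrow> Q d P \<le> (\<Prod>t<d. s + 2 * real t) / fact d * Bn P"
proof (induction d arbitrary: P s)
  case 0 then show ?case by (simp add: Q_def mi_zero)
next
  case (Suc d)
  define K where "K = (\<Prod>t<d. (s + 2) + 2 * real t) / fact d"
  have K0: "K \<ge> 0" unfolding K_def using Suc.prems by (intro divide_nonneg_pos prod_nonneg) auto
  have "Q (Suc d) P = (\<Sum>l<n. Q d (dp l P)) / real (Suc d)" by (rule Q_Suc)
  also have "\<dots> \<le> (\<Sum>l<n. K * Bn (dp l P)) / real (Suc d)"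
  proof (intro divide_right_mono sum_mono)
    fix l assume "l \<in> {..<n}" then have l: "l < n" by simp
    show "Q d (dp l P) \<le> K * Bn (dp l P)" unfolding K_def
      by (rule Suc.IH) (use Suc.prems sig_dp[OF l] in auto)
  qed simp
  also have "\<dots> = K * (\<Sum>l<n. Bn (dp l P)) / real (Suc d)" by (simp add: sum_distrib_left)
  also have "\<dots> \<le> K * (s * Bn P) / real (Suc d)"
    by (intro divide_right_mono mult_left_mono Bn_dp_sum Suc.prems K0) simp
  also have "\<dots> = (\<Prod>t<Suc d. s + 2 * real t) / fact (Suc d) * Bn P"
  proof -
    have "(\<Prod>t<Suc d. s + 2 * real t) = s * (\<Prod>t<d. (s + 2) + 2 * real t)"
    proof -
      have "(\<Prod>t<Suc d. s + 2 * real t) = (s + 2 * real 0) * (\<Prod>t<d. s + 2 * real (Suc t))"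
        by (rule prod.lessThan_Suc_shift)
      also have "(\<Prod>t<d. s + 2 * real (Suc t)) = (\<Prod>t<d. (s + 2) + 2 * real t)"
        by (intro prod.cong refl) (simp add: algebra_simps)
      finally show ?thesis by simp
    qed
    then show ?thesis by (simp add: K_def field_simps)
  qed
  finally show ?case .
qed

end

lemma fact_as_prod: "(fact d :: real) = (\<Prod>t<d. real t + 1)"
  by (induction d) (simp_all add: algebra_simps)

lemma final_bound:
  "(\<Prod>t<d. 2 * real m + 2 * real t) / fact d \<le> (exp 3 * real m) ^ d"
proof (cases "m = 0")
  case True
  then show ?thesis
  proof (cases d)
    case (Suc d')
    have z: "(\<Prod>t<d. 2 * real m + 2 * real t) = 0"
      using True Suc by (subst prod_zero_iff) auto
    show ?thesis unfolding z using True Suc by simp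
  qed simp
next
  case False
  have m1: "real m \<ge> 1" using False by simp
  have "(\<Prod>t<d. 2 * real m + 2 * real t) \<le> (\<Prod>t<d. (2 * real m) * (real t + 1))"
  proof (rule prod_mono)
    fix t assume "t \<in> {..<d}"
    have "1 * real t \<le> real m * real t" by (rule mult_right_mono[OF m1]) simp
    then have "2 * real m + 2 * real t \<le> 2 * real m * (real t + 1)"
      by (simp add: ring_distribs)
    then show "0 \<le> 2 * real m + 2 * real t \<and> 2 * real m + 2 * real t \<le> 2 * real m * (real t + 1)"
      by simp
  qed
  also have "(\<Prod>t<d. (2 * real m) * (real t + 1)) = (2 * real m) ^ d * fact d"
    unfolding prod.distrib fact_as_prod by simp
  finally have le: "(\<Prod>t<d. 2 * real m + 2 * real t) \<le> (2 * real m) ^ d * fact d" .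
  have "(\<Prod>t<d. 2 * real m + 2 * real t) / fact d \<le> (2 * real m) ^ d"
    using le by (subst pos_divide_le_eq) auto
  also have "\<dots> \<le> (exp 3 * real m) ^ d"
  proof (rule power_mono)
    have "(2::real) \<le> exp 3" using exp_ge_add_one_self[of 3] by simp
    then show "2 * real m \<le> exp 3 * real m" by (intro mult_right_mono) auto
  qed simp
  finally show ?thesis .
qed

theorem lemmaB6:
  fixes m n :: nat and j :: "nat \<Rightarrow> nat" and \<xi> :: "nat \<Rightarrow> nat \<Rightarrow> real"
  assumes "\<And>i. i < m \<Longrightarrow> j i < n"
    and "\<And>i k. i < m \<Longrightarrow> k < n \<Longrightarrow> \<xi> i k \<ge> 0"
    and "\<And>i. i < m \<Longrightarrow> (\<Sum>k<n. \<xi> i k) = 1"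
  shows "(\<Sum>\<gamma>\<in>multi_indices n d.
            \<bar>taylor_coeff n (\<lambda>z. \<Prod>i<m. softmax_type n (j i) (\<xi> i) z) \<gamma>\<bar>)
         \<le> (exp 3 * real m) ^ d"
proof -
  interpret sm n m \<xi> by unfold_locales (use assms(2,3) in auto)
  define \<alpha>0 where "\<alpha>0 k = card {i\<in>{..<m}. j i = k}" for k
  define P0 where "P0 = [(1::real, \<alpha>0, (\<lambda>_::nat. 1::nat))]"
  have grp: "(\<Sum>k<n. (\<Sum>i\<in>{i\<in>{..<m}. j i = k}. h i)) = (\<Sum>i<m. h i)" for h :: "nat \<Rightarrow> real"
    by (rule sum.group) (use assms(1) in auto)
  have grpn: "(\<Sum>k<n. \<alpha>0 k) = m"
  proof -
    have "(\<Sum>k<n. (\<Sum>i\<in>{i\<in>{..<m}. j i = k}. (1::nat))) = (\<Sum>i<m. 1)"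
      by (rule sum.group) (use assms(1) in auto)
    then show ?thesis by (simp add: \<alpha>0_def)
  qed
  have F: "(\<lambda>z. \<Prod>i<m. softmax_type n (j i) (\<xi> i) z) = ev P0"
  proof
    fix z
    have A: "(\<Sum>k<n. real (\<alpha>0 k) * z k) = (\<Sum>i<m. z (j i))"
    proof -
      have "(\<Sum>k<n. real (\<alpha>0 k) * z k) = (\<Sum>k<n. (\<Sum>i\<in>{i\<in>{..<m}. j i = k}. z (j i)))"
      proof (intro sum.cong refl)
        fix k
        have "(\<Sum>i\<in>{i\<in>{..<m}. j i = k}. z (j i)) = (\<Sum>i\<in>{i\<in>{..<m}. j i = k}. z k)"
          by (rule sum.cong) auto
        also have "\<dots> = real (\<alpha>0 k) * z k" unfolding \<alpha>0_def by (rule sum_constant)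
        finally show "real (\<alpha>0 k) * z k = (\<Sum>i\<in>{i\<in>{..<m}. j i = k}. z (j i))" by (rule sym)
      qed
      then show ?thesis using grp[of "\<lambda>i. z (j i)"] by simp
    qed
    have "ev P0 z = exp ((\<Sum>i<m. z (j i)) - (\<Sum>i<m. ln (Dn i z)))"
      by (simp add: P0_def Mon_def A)
    also have "\<dots> = (\<Prod>i<m. exp (z (j i))) / (\<Prod>i<m. exp (ln (Dn i z)))"
      by (simp add: exp_diff exp_sum)
    also have "(\<Prod>i<m. exp (ln (Dn i z))) = (\<Prod>i<m. Dn i z)"
      by (intro prod.cong refl) (simp add: Dn_pos)
    also have "(\<Prod>i<m. exp (z (j i))) / (\<Prod>i<m. Dn i z) = (\<Prod>i<m. exp (z (j i)) / Dn i z)"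
      by (simp add: prod_dividef)
    finally show "(\<Prod>i<m. softmax_type n (j i) (\<xi> i) z) = ev P0 z"
      by (simp add: softmax_type_def Dn_def)
  qed
  have sigP0: "\<forall>x\<in>set P0. sig x \<le> 2 * real m"
  proof -
    have s1: "sig (1, \<alpha>0, \<lambda>_::nat. 1::nat) = real (\<Sum>k<n. \<alpha>0 k) + real (\<Sum>i<m. (1::nat))"
      by (simp only: sig_def prod.case)
    have s2: "sig (1, \<alpha>0, \<lambda>_::nat. 1::nat) = 2 * real m"
    proof -
      have s3: "(\<Sum>i<m. (1::nat)) = m" using card_eq_sum[of "{..<m}"] card_lessThan[of m] by linarith
      show ?thesis unfolding s1 grpn s3 by linarith
    qed
    show ?thesis
    proof
      fix x assume "x \<in> set P0"
      then have "x = (1, \<alpha>0, \<lambda>_::nat. 1::nat)" by (simp add: P0_def)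
      then show "sig x \<le> 2 * real m" using s2 by (metis order_refl)
    qed
  qed
  have "(\<Sum>\<gamma>\<in>multi_indices n d. \<bar>taylor_coeff n (ev P0) \<gamma>\<bar>)
      \<le> (\<Sum>\<gamma>\<in>multi_indices n d. R d \<gamma> P0 / (\<Prod>k<n. fact (\<gamma> k)))"
  proof (rule sum_mono)
    fix \<gamma> assume g: "\<gamma> \<in> multi_indices n d"
    have pos: "(\<Prod>k<n. fact (\<gamma> k) :: real) > 0" by (intro prod_pos) auto
    have "\<bar>mixed_partial n \<gamma> (ev P0) (\<lambda>_. 0)\<bar> \<le> R d \<gamma> P0"
      by (rule claimA) (use g in \<open>simp add: multi_indices_def\<close>)
    then have "\<bar>mixed_partial n \<gamma> (ev P0) (\<lambda>_. 0)\<bar> / (\<Prod>k<n. fact (\<gamma> k)) \<le> R d \<gamma> P0 / (\<Prod>k<n. fact (\<gamma> k))"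
      by (rule divide_right_mono) (use pos in linarith)
    moreover have "\<bar>taylor_coeff n (ev P0) \<gamma>\<bar> = \<bar>mixed_partial n \<gamma> (ev P0) (\<lambda>_. 0)\<bar> / (\<Prod>k<n. fact (\<gamma> k))"
      unfolding taylor_coeff_def using pos by (simp only: abs_divide abs_of_pos)
    ultimately show "\<bar>taylor_coeff n (ev P0) \<gamma>\<bar> \<le> R d \<gamma> P0 / (\<Prod>k<n. fact (\<gamma> k))" by simp
  qed
  also have "\<dots> = Q d P0" by (simp only: Q_def)
  also have "\<dots> \<le> (\<Prod>t<d. 2 * real m + 2 * real t) / fact d * Bn P0"
    by (rule claimB) (use sigP0 in auto)
  also have "\<dots> \<le> (exp 3 * real m) ^ d"
  proof -
    have "Bn P0 = 1" by (simp add: P0_def Bn_def)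
    then show ?thesis using final_bound[of m d] by simp
  qed
  finally show ?thesis unfolding F .
qed

end
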